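(* Let $r\geq 2$ and $d\geq 2$ be integers and let $\mathbf a=(a_1,\ldots,a_r)$ be a sequence of positive integers. For an integer $n\geq 0$ let $\mathbf p_{\mathbf a,d}(n)$ denote the number of integer tuples $(x_1,\ldots,x_r)$ with $\sum_{i=1}^r a_ix_i=n$, $x_i\geq 0$ and $x_i\equiv 0$ or $x_i\equiv 1\pmod d$ for all $i$. Write $d\mathbf a=(da_1,\ldots,da_r)$, $[r]=\{1,\ldots,r\}$, and for $J\subseteq[r]$ let $a_J=\sum_{i\in J}a_i$ (so $a_\emptyset=0$). Then for all $n\geq 0$, $$\mathbf p_{\mathbf a,d}(n)=\sum_{J\subseteq[r]}p_{d\mathbf a}(n-a_J),$$ and the polynomial part of $\mathbf p_{\mathbf a,d}$ satisfies $$P_{\mathbf a,d}(n)=\sum_{J\subseteq[r]}P_{d\mathbf a}(n-a_J).$$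
   Context: For a sequence $\mathbf b=(b_1,\ldots,b_r)$ of positive integers and an integer $m$, $p_{\mathbf b}(m)$ is the number of integer tuples $(y_1,\ldots,y_r)$ with $y_i\geq 0$ and $\sum_i b_iy_i=m$ (so $p_{\mathbf b}(m)=0$ for $m<0$). The polynomial part $P_{\mathbf b}(m)$ of $p_{\mathbf b}$ is the polynomial in $m$ given by the coefficient of $t^{-1}$ in the Laurent expansion at $t=0$ of $\dfrac{e^{mt}}{\prod_{i=1}^r(1-e^{-b_it})}$ (Sylvester's first wave). The polynomial part $P_{\mathbf a,d}(n)$ of $\mathbf p_{\mathbf a,d}$ is the coefficient of $t^{-1}$ in the Laurent expansion at $t=0$ of $e^{nt}\prod_{i=1}^r\dfrac{1+e^{-a_it}}{1-e^{-da_it}}$. *)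

theory Defs
  imports "HOL-Complex_Analysis.Complex_Analysis"
begin

text \<open>p_b(m): number of (y_1..y_r) >= 0 with sum b_i y_i = m (zero for m < 0).\<close>
definition part_count :: "nat list \<Rightarrow> int \<Rightarrow> nat" where
  "part_count b m = card {y :: nat list. length y = length b \<and>
      int (\<Sum>i<length b. b ! i * y ! i) = m}"

definition part_count_mod :: "nat list \<Rightarrow> nat \<Rightarrow> nat \<Rightarrow> nat" where
  "part_count_mod a d n = card {x :: nat list. length x = length a \<and>
      (\<Sum>i<length a. a ! i * x ! i) = n \<and>
      (\<forall>i<length a. x ! i mod d = 0 \<or> x ! i mod d = 1)}"

definition poly_part :: "nat list \<Rightarrow> complex \<Rightarrow> complex" where
  "poly_part b m = fls_nth (laurent_expansion
      (\<lambda>t. exp (m * t) / (\<Prod>i<length b. (1 - exp (- (of_nat (b ! i)) * t)))) 0) (-1)"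

definition poly_part_mod :: "nat list \<Rightarrow> nat \<Rightarrow> complex \<Rightarrow> complex" where
  "poly_part_mod a d n = fls_nth (laurent_expansion
      (\<lambda>t. exp (n * t) * (\<Prod>i<length a. (1 + exp (- (of_nat (a ! i)) * t))
            / (1 - exp (- (of_nat (d * a ! i)) * t)))) 0) (-1)"

end

theory Submission
  imports Defs
begin


lemma analytic_laurent:
  assumes "f analytic_on {0}"
  shows "f has_laurent_expansion fps_to_fls (fps_expansion f 0)"
  using analytic_at_imp_has_fps_expansion_0[OF assms] has_fps_expansion_to_laurent by blast

lemma poly_part_sum:
  fixes a :: "nat list" and d :: nat and n :: nat
  shows "poly_part_mod a d (of_nat n) =
        (\<Sum>J\<in>Pow {..<length a}. poly_part (map (\<lambda>x. d * x) a) (of_nat n - of_nat (\<Sum>i\<in>J. a ! i)))"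
proof -
  define D where "D = (\<lambda>t::complex. \<Prod>i<length a. (1 - exp (- (of_nat (d * a ! i)) * t)))"
  define g where "g = (\<lambda>J t. exp ((of_nat n - of_nat (\<Sum>i\<in>J. a ! i)) * t) / D t)"
  have DL: "D has_laurent_expansion fps_to_fls (fps_expansion D 0)"
    unfolding D_def by (intro analytic_laurent analytic_intros)
  have gL: "g J has_laurent_expansion fps_to_fls (fps_expansion (\<lambda>t. exp ((of_nat n - of_nat (\<Sum>i\<in>J. a ! i)) * t)) 0) / fps_to_fls (fps_expansion D 0)" for J
    unfolding g_def by (intro has_laurent_expansion_divide DL analytic_laurent analytic_intros)
  have eq: "(\<lambda>t. exp (of_nat n * t) * (\<Prod>i<length a. (1 + exp (- (of_nat (a ! i)) * t))
            / (1 - exp (- (of_nat (d * a ! i)) * t)))) = (\<lambda>t. \<Sum>J\<in>Pow {..<length a}. g J t)"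
  proof
    fix t :: complex
    have "(\<Prod>i<length a. (1 + exp (- (of_nat (a ! i)) * t))) = (\<Prod>i<length a. (exp (- (of_nat (a ! i)) * t) + 1))"
      by (simp add: add.commute)
    also have "\<dots> = (\<Sum>J\<in>Pow {..<length a}. \<Prod>i\<in>J. exp (- (of_nat (a ! i)) * t))"
      by (subst prod_add) auto
    finally have pe: "(\<Prod>i<length a. (1 + exp (- (of_nat (a ! i)) * t))) = (\<Sum>J\<in>Pow {..<length a}. \<Prod>i\<in>J. exp (- (of_nat (a ! i)) * t))" .
    have ex: "exp (of_nat n * t) * (\<Prod>i\<in>J. exp (- (of_nat (a ! i)) * t)) = exp ((of_nat n - of_nat (\<Sum>i\<in>J. a ! i)) * t)" if "J \<in> Pow {..<length a}" for J
    proof -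
      have fin: "finite J" using that finite_subset by blast
      have "(\<Prod>i\<in>J. exp (- (of_nat (a ! i)) * t)) = exp (\<Sum>i\<in>J. - (of_nat (a ! i)) * t)"
        using fin by (simp add: exp_sum)
      also have "(\<Sum>i\<in>J. - (of_nat (a ! i)) * t) = - of_nat (\<Sum>i\<in>J. a ! i) * t"
        by (simp add: sum_distrib_right sum_negf)
      finally show ?thesis by (simp add: exp_add[symmetric] algebra_simps)
    qed
    show "exp (of_nat n * t) * (\<Prod>i<length a. (1 + exp (- (of_nat (a ! i)) * t))
            / (1 - exp (- (of_nat (d * a ! i)) * t))) = (\<Sum>J\<in>Pow {..<length a}. g J t)"
      unfolding prod_dividef pe g_def D_def sum_distrib_left sum_divide_distrib times_divide_eq_right
      by (intro sum.cong refl arg_cong2[where f="(/)"], rule ex, assumption)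
  qed
  have "laurent_expansion (\<lambda>t. \<Sum>J\<in>Pow {..<length a}. g J t) 0 = (\<Sum>J\<in>Pow {..<length a}. laurent_expansion (g J) 0)"
    by (intro laurent_expansion_0_eqI has_laurent_expansion_sum)
       (simp only: laurent_expansion_0_eqI[OF gL] gL)
  moreover have "poly_part (map (\<lambda>x. d * x) a) (of_nat n - of_nat (\<Sum>i\<in>J. a ! i)) = fls_nth (laurent_expansion (g J) 0) (-1)" for J
    unfolding poly_part_def g_def D_def by simp
  ultimately show ?thesis
    unfolding poly_part_mod_def eq by (simp add: fls_nth_sum)
qed


lemma sum_h:
  fixes a y :: "nat list" and J :: "nat set"
  assumes "J \<subseteq> {..<length a}" "length y = length a"
  shows "(\<Sum>i<length a. a ! i * (map (\<lambda>i. d * y ! i + (if i \<in> J then 1 else 0)) [0..<length a]) ! i)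
     = (\<Sum>i<length a. map (\<lambda>x. d * x) a ! i * y ! i) + (\<Sum>i\<in>J. a ! i)"
proof -
  have "(\<Sum>i<length a. a ! i * (map (\<lambda>i. d * y ! i + (if i \<in> J then 1 else 0)) [0..<length a]) ! i)
      = (\<Sum>i<length a. map (\<lambda>x. d * x) a ! i * y ! i + (if i \<in> J then a ! i else 0))"
    by (intro sum.cong refl) (auto simp: algebra_simps)
  also have "\<dots> = (\<Sum>i<length a. map (\<lambda>x. d * x) a ! i * y ! i) + (\<Sum>i\<in>J. a ! i)"
    using assms(1) by (simp add: sum.distrib sum.If_cases Int_absorb1)
  finally show ?thesis .
qed

lemma finite_T:
  assumes "\<forall>i<length b. b ! i > 0"
  shows "finite {y :: nat list. length y = length b \<and> int (\<Sum>i<length b. b ! i * y ! i) = m}"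
proof (rule finite_subset)
  show "finite {y :: nat list. set y \<subseteq> {..nat m} \<and> length y = length b}"
    by (rule finite_lists_length_eq) simp
  show "{y :: nat list. length y = length b \<and> int (\<Sum>i<length b. b ! i * y ! i) = m} \<subseteq> {y. set y \<subseteq> {..nat m} \<and> length y = length b}"
  proof (rule subsetI)
    fix y assume "y \<in> {y :: nat list. length y = length b \<and> int (\<Sum>i<length b. b ! i * y ! i) = m}"
    hence y: "length y = length b" "m = int (\<Sum>i<length b. b ! i * y ! i)" by auto
    have "\<forall>v\<in>set y. v \<le> nat m"
    proof
      fix v assume "v \<in> set y"
      then obtain k where k: "k < length b" "v = y ! k" using y by (auto simp: in_set_conv_nth)
      have "b ! k \<ge> 1" using k assms by (simp add: Suc_le_eq)
      hence "v \<le> b ! k * y ! k" using k by simp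
      also have "\<dots> \<le> (\<Sum>i<length b. b ! i * y ! i)"
        by (rule member_le_sum) (use k in auto)
      finally have "v \<le> (\<Sum>i<length b. b ! i * y ! i)" .
      moreover have "nat m = (\<Sum>i<length b. b ! i * y ! i)" using y(2) by (metis nat_int)
      ultimately show "v \<le> nat m" by simp
    qed
    thus "y \<in> {y. set y \<subseteq> {..nat m} \<and> length y = length b}" using y by auto
  qed
qed

lemma count_part:
  fixes a :: "nat list" and d :: nat
  assumes "d \<ge> 2" and pos: "\<forall>i<length a. a ! i > 0"
  shows "part_count_mod a d n =
        (\<Sum>J\<in>Pow {..<length a}. part_count (map (\<lambda>x. d * x) a) (int n - int (\<Sum>i\<in>J. a ! i)))"
proof -
  define b where "b = map (\<lambda>x. d * x) a"
  have lb: "length b = length a" by (simp add: b_def)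
  have bpos: "\<forall>i<length b. b ! i > 0" using pos assms(1) by (simp add: b_def)
  define S where "S = {x :: nat list. length x = length a \<and>
      (\<Sum>i<length a. a ! i * x ! i) = n \<and>
      (\<forall>i<length a. x ! i mod d = 0 \<or> x ! i mod d = 1)}"
  define T where "T = (\<lambda>J. {y :: nat list. length y = length b \<and>
      int (\<Sum>i<length b. b ! i * y ! i) = int n - int (\<Sum>i\<in>J. a ! i)})"
  define h where "h = (\<lambda>(J, y :: nat list). map (\<lambda>i. d * y ! i + (if i \<in> J then 1 else 0)) [0..<length a])"
  define g where "g = (\<lambda>x :: nat list. ({i. i < length a \<and> x ! i mod d = 1}, map (\<lambda>v. v div d) x))"
  have bij: "bij_betw g S (Sigma (Pow {..<length a}) T)"
  proof (rule bij_betw_byWitness[where f'=h])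
    show "\<forall>x\<in>S. h (g x) = x"
    proof
      fix x assume "x \<in> S"
      hence x: "length x = length a" "\<forall>i<length a. x ! i mod d = 0 \<or> x ! i mod d = 1" by (auto simp: S_def)
      show "h (g x) = x"
      proof (rule nth_equalityI)
        show "length (h (g x)) = length x" using x by (simp add: h_def g_def)
        fix i assume "i < length (h (g x))"
        hence i: "i < length a" by (simp add: h_def g_def)
        have e: "(if x ! i mod d = 1 then 1 else (0::nat)) = x ! i mod d" using x i by auto
        have "h (g x) ! i = d * (x ! i div d) + (if x ! i mod d = 1 then 1 else 0)"
          using i x by (simp add: h_def g_def)
        also have "\<dots> = d * (x ! i div d) + x ! i mod d" by (simp only: e)
        also have "\<dots> = x ! i" by simp
        finally show "h (g x) ! i = x ! i" .
      qed
    qed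
    show "\<forall>p\<in>Sigma (Pow {..<length a}) T. g (h p) = p"
    proof
      fix p assume "p \<in> Sigma (Pow {..<length a}) T"
      then obtain J y where p: "p = (J, y)" "J \<subseteq> {..<length a}" "length y = length a"
        by (auto simp: T_def lb)
      have m1: "(d * y ! i + (if i \<in> J then 1 else 0)) mod d = (if i \<in> J then 1 else 0)" for i
        using assms(1) by auto
      have d1: "(d * y ! i + (if i \<in> J then 1 else 0)) div d = y ! i" for i
        using assms(1) by auto
      have "{i. i < length a \<and> (d * y ! i + (if i \<in> J then 1 else 0)) mod d = 1} = J"
        using p(2) m1 by auto
      moreover have "map (\<lambda>v. v div d) (map (\<lambda>i. d * y ! i + (if i \<in> J then 1 else 0)) [0..<length a]) = y"
        using p(3) d1 by (intro nth_equalityI) auto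
      ultimately show "g (h p) = p" using p(1) by (simp add: g_def h_def cong: conj_cong)
    qed
    show "g ` S \<subseteq> Sigma (Pow {..<length a}) T"
    proof (rule image_subsetI)
      fix x assume "x \<in> S"
      hence x: "length x = length a" "(\<Sum>i<length a. a ! i * x ! i) = n" "\<forall>i<length a. x ! i mod d = 0 \<or> x ! i mod d = 1" by (auto simp: S_def)
      have A: "fst (g x) \<in> Pow {..<length a}" by (auto simp: g_def)
      have hx: "h (g x) = x"
      proof (rule nth_equalityI)
        show "length (h (g x)) = length x" using x by (simp add: h_def g_def)
        fix i assume "i < length (h (g x))"
        hence i: "i < length a" by (simp add: h_def g_def)
        have e: "(if x ! i mod d = 1 then 1 else (0::nat)) = x ! i mod d" using x i by auto
        have "h (g x) ! i = d * (x ! i div d) + (if x ! i mod d = 1 then 1 else 0)"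
          using i x by (simp add: h_def g_def)
        also have "\<dots> = d * (x ! i div d) + x ! i mod d" by (simp only: e)
        also have "\<dots> = x ! i" by simp
        finally show "h (g x) ! i = x ! i" .
      qed
      obtain J y where gx: "g x = (J, y)" by (cases "g x")
      have JA: "J \<subseteq> {..<length a}" and yl: "length y = length a" using A gx x by (auto simp: g_def)
      have "n = (\<Sum>i<length a. a ! i * h (J,y) ! i)" using x(2) hx gx by simp
      also have "\<dots> = (\<Sum>i<length a. b ! i * y ! i) + (\<Sum>i\<in>J. a ! i)"
        using sum_h[OF JA yl, of d] unfolding b_def h_def by simp
      finally have "y \<in> T J" using yl by (simp add: T_def lb)
      thus "g x \<in> Sigma (Pow {..<length a}) T" using A gx by simp
    qed
    show "h ` Sigma (Pow {..<length a}) T \<subseteq> S"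
    proof (rule image_subsetI)
      fix p assume "p \<in> Sigma (Pow {..<length a}) T"
      then obtain J y where p: "p = (J, y)" and J: "J \<subseteq> {..<length a}" and y: "y \<in> T J" by auto
      hence yl: "length y = length a" and ys: "int (\<Sum>i<length a. b ! i * y ! i) = int n - int (\<Sum>i\<in>J. a ! i)"
        by (auto simp: T_def lb)
      have "(\<Sum>i<length a. b ! i * y ! i) + (\<Sum>i\<in>J. a ! i) = n" using ys by linarith
      moreover have "(\<Sum>i<length a. a ! i * h (J, y) ! i) = (\<Sum>i<length a. b ! i * y ! i) + (\<Sum>i\<in>J. a ! i)"
        using sum_h[OF J yl, of d] unfolding b_def h_def by simp
      ultimately have "(\<Sum>i<length a. a ! i * h (J, y) ! i) = n" using lb by simp
      moreover have "\<forall>i<length a. h (J, y) ! i mod d = 0 \<or> h (J, y) ! i mod d = 1"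
        using assms(1) by (auto simp: h_def)
      ultimately show "h p \<in> S" by (simp add: S_def h_def p)
    qed
  qed
  have "part_count_mod a d n = card S" by (simp add: part_count_mod_def S_def)
  also have "\<dots> = card (Sigma (Pow {..<length a}) T)" by (rule bij_betw_same_card[OF bij])
  also have "\<dots> = (\<Sum>J\<in>Pow {..<length a}. card (T J))"
    by (rule card_SigmaI) (simp_all only: T_def finite_T[OF bpos] finite_Pow_iff finite_lessThan, simp)
  also have "\<dots> = (\<Sum>J\<in>Pow {..<length a}. part_count b (int n - int (\<Sum>i\<in>J. a ! i)))"
    by (simp add: T_def part_count_def)
  finally show ?thesis by (simp add: b_def)
qed

theorem proposition2p2:
  fixes a :: "nat list" and d :: nat
  assumes "length a \<ge> 2" and "d \<ge> 2" and "\<forall>i<length a. a ! i > 0"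
  shows "\<forall>n::nat.
      part_count_mod a d n =
        (\<Sum>J\<in>Pow {..<length a}. part_count (map (\<lambda>x. d * x) a) (int n - int (\<Sum>i\<in>J. a ! i)))
    \<and> poly_part_mod a d (of_nat n) =
        (\<Sum>J\<in>Pow {..<length a}. poly_part (map (\<lambda>x. d * x) a) (of_nat n - of_nat (\<Sum>i\<in>J. a ! i)))"
  using count_part[OF assms(2,3)] poly_part_sum by blast

end
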